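(* Let $(W,\bar W)$ be a solution of the $q$-Sato equation (see context). For a constant $\lambda\in\mathbb{C}^\times$ and constant diagonal matrices $D(\alpha)=\mathrm{diag}[\alpha_1,\dots,\alpha_N]$, $D(\beta)=\mathrm{diag}[\beta_1,\dots,\beta_N]$, define $$W_\lambda(\Lambda;s,\underline{x})=\lambda^{s+D(\alpha)}\circ W(\Lambda;s,\underline{x}_\lambda)\circ\lambda^{-s-D(\alpha)},\qquad \bar W_\lambda(\Lambda;s,\underline{x})=\lambda^{s+D(\alpha)}\circ\bar W(\Lambda;s,\underline{x}_\lambda)\circ\lambda^{-s-D(\beta)},$$ where $\underline{x}_\lambda=\{\lambda^nx_n^{(k)}\ (n\ge1,\ k=1,\dots,N)\}$ and $\lambda^{\pm(s+D(\alpha))}$ denotes the operator of multiplication by $\mathrm{diag}[\lambda^{\pm(s+\alpha_1)},\dots,\lambda^{\pm(s+\alpha_N)}]$ (similarly for $\beta$). Then $(W_\lambda,\bar W_\lambda)$ is also a solution of the $q$-Sato equation.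
   Context: Fix $q\in\mathbb{C}$ with $|q|>1$ and $N\ge1$. Let $s\in\mathbb{Z}$ be a discrete variable and $\underline{x}=\{x_n^{(k)}: n\ge1,\ k=1,\dots,N\}$ continuous variables. $\Lambda$ is the shift operator $\Lambda f(s)=f(s+1)$; $T_q(x_n^{(k)})$ is the $q$-shift $x_n^{(k)}\mapsto qx_n^{(k)}$, and $\mathcal{D}_q(x)f(x)=(f(x)-f(qx))/x$; these act on operators coefficientwise. $I_k=[\delta_{ij}\delta_{ik}]_{1\le i,j\le N}$. The Sato–Wilson operators are $W(\Lambda;s,\underline{x})=I+\sum_{i\ge1}W_i(s;\underline{x})\Lambda^{-i}$ and $\bar W(\Lambda;s,\underline{x})=\sum_{j\ge0}\bar W_j(s;\underline{x})\Lambda^j$, with $N\times N$ matrix coefficients and $\bar W_0$ invertible. For $A=\sum_nA_n\Lambda^n$ put $[A]_{\ge0}=\sum_{n\ge0}A_n\Lambda^n$. The $q$-Sato equation: for all $n\ge1$, $k=1,\dots,N$ and $\widetilde W\in\{W,\bar W\}$, $$\mathcal{D}_q(x_n^{(k)})\widetilde W=\Big[\big(T_q(x_n^{(k)})W\big)I_k\Lambda^nW^{-1}\Big]_{\ge0}\widetilde W-\big(T_q(x_n^{(k)})\widetilde W\big)I_k\Lambda^n.$$ *)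

theory Defs
  imports "HOL-Analysis.Analysis"
begin

text \<open>
The size N is the cardinality of the finite index type 'n.
An operator A = sum_j A_j(s) Lambda^j is represented by its coefficient function:
A j s is the coefficient of Lambda^j, evaluated at the discrete variable s.
The continuous variables x_n^(k) are a function x :: nat => 'n => complex
(x n k = x_n^(k); the entries x 0 k are unused dummies).
\<close>

type_synonym 'n mop = "int \<Rightarrow> int \<Rightarrow> complex^'n^'n"
type_synonym 'n xvars = "nat \<Rightarrow> 'n \<Rightarrow> complex"

text \<open>Composition: (a_i Lambda^i)(b_j Lambda^j) = a_i(s) b_j(s+i) Lambda^(i+j).
The sum is over the (finite, for all products used) set of contributing indices.\<close>
definition op_mult :: "'n::finite mop \<Rightarrow> 'n mop \<Rightarrow> 'n mop" where
  "op_mult A B = (\<lambda>m s. \<Sum>i\<in>{i. A i s \<noteq> 0 \<and> B (m - i) (s + i) \<noteq> 0}. A i s ** B (m - i) (s + i))"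

definition op_one :: "'n::finite mop" where
  "op_one = (\<lambda>j s. if j = 0 then mat 1 else 0)"

definition op_Lam :: "int \<Rightarrow> 'n::finite mop" where
  "op_Lam n = (\<lambda>j s. if j = n then mat 1 else 0)"

definition op_mul_fun :: "(int \<Rightarrow> complex^'n^'n) \<Rightarrow> 'n::finite mop" where
  "op_mul_fun f = (\<lambda>j s. if j = 0 then f s else 0)"

definition Imat :: "'n::finite \<Rightarrow> complex^'n^'n" where
  "Imat k = (\<chi> a b. if a = k \<and> b = k then 1 else 0)"

definition op_pos :: "'n::finite mop \<Rightarrow> 'n mop" where
  "op_pos A = (\<lambda>j s. if j \<ge> 0 then A j s else 0)"

definition bounded_above :: "'n::finite mop \<Rightarrow> bool" where
  "bounded_above A \<longleftrightarrow> (\<exists>M. \<forall>j s. j > M \<longrightarrow> A j s = 0)"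

definition op_inv :: "'n::finite mop \<Rightarrow> 'n mop" where
  "op_inv A = (THE V. bounded_above V \<and> op_mult A V = op_one \<and> op_mult V A = op_one)"

definition Tq :: "complex \<Rightarrow> nat \<Rightarrow> 'n \<Rightarrow> 'n xvars \<Rightarrow> 'n xvars" where
  "Tq q n k x = x(n := (x n)(k := q * x n k))"

definition Dq :: "complex \<Rightarrow> nat \<Rightarrow> 'n::finite \<Rightarrow> ('n xvars \<Rightarrow> 'n mop) \<Rightarrow> 'n xvars \<Rightarrow> 'n mop" where
  "Dq q n k F x = (\<lambda>j s. mat (1 / x n k) ** (F x j s - F (Tq q n k x) j s))"

text \<open>The q-Sato equation for the pair (W, Wb), including the shape requirements on the
Sato-Wilson operators. D_q(x_n^(k)) is only defined where x_n^(k) is nonzero.\<close>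
definition qsato_solution :: "complex \<Rightarrow> ('n::finite xvars \<Rightarrow> 'n mop) \<Rightarrow> ('n xvars \<Rightarrow> 'n mop) \<Rightarrow> bool" where
  "qsato_solution q W Wb \<longleftrightarrow>
     (\<forall>x s. W x 0 s = mat 1 \<and> (\<forall>j > 0. W x j s = 0)) \<and>
     (\<forall>x s. (\<forall>j < 0. Wb x j s = 0) \<and> invertible (Wb x 0 s)) \<and>
     (\<forall>n \<ge> 1. \<forall>k x. x n k \<noteq> 0 \<longrightarrow>
        (\<forall>Wt \<in> {W, Wb}.
           Dq q n k Wt x =
             (\<lambda>j s. op_mult (op_pos (op_mult (op_mult (W (Tq q n k x)) (op_mult (op_mul_fun (\<lambda>_. Imat k)) (op_Lam (int n))))
                                             (op_inv (W x))))
                            (Wt x) j s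
                    - op_mult (Wt (Tq q n k x)) (op_mult (op_mul_fun (\<lambda>_. Imat k)) (op_Lam (int n))) j s)))"

text \<open>lambda^{s + D(alpha)} and its negative: diag[lambda^{s+alpha_i}] (principal branch powr)\<close>
definition lam_pow_diag :: "complex \<Rightarrow> complex^'n \<Rightarrow> int \<Rightarrow> complex^'n^'n::finite" where
  "lam_pow_diag lam a s = (\<chi> i j. if i = j then lam powr (of_int s + a $ i) else 0)"

definition lam_pow_diag_neg :: "complex \<Rightarrow> complex^'n \<Rightarrow> int \<Rightarrow> complex^'n^'n::finite" where
  "lam_pow_diag_neg lam a s = (\<chi> i j. if i = j then lam powr (- (of_int s + a $ i)) else 0)"

definition xscale :: "complex \<Rightarrow> 'n xvars \<Rightarrow> 'n xvars" where
  "xscale lam x = (\<lambda>n k. lam ^ n * x n k)"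


definition gauge :: "complex \<Rightarrow> complex^'n \<Rightarrow> complex^'n \<Rightarrow> ('n::finite xvars \<Rightarrow> 'n mop) \<Rightarrow> ('n xvars \<Rightarrow> 'n mop)" where
  "gauge lam a b F = (\<lambda>x. op_mult (op_mult (op_mul_fun (lam_pow_diag lam a)) (F (xscale lam x)))
                                  (op_mul_fun (lam_pow_diag_neg lam b)))"

end

theory Submission
  imports Defs
begin


lemma op_mult_eq_sum:
  assumes "finite F" "\<And>i. A i s \<noteq> 0 \<Longrightarrow> B (m - i) (s + i) \<noteq> 0 \<Longrightarrow> i \<in> F"
  shows "op_mult A B m s = (\<Sum>i\<in>F. A i s ** B (m - i) (s + i))"
  unfolding op_mult_def
proof -
  have sub: "{i. A i s \<noteq> 0 \<and> B (m - i) (s + i) \<noteq> 0} \<subseteq> F" using assms(2) by blast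
  show "(\<Sum>i\<in>{i. A i s \<noteq> 0 \<and> B (m - i) (s + i) \<noteq> 0}. A i s ** B (m - i) (s + i)) =
        (\<Sum>i\<in>F. A i s ** B (m - i) (s + i))"
    by (rule sum.mono_neutral_left[OF assms(1) sub]) auto
qed

definition lower :: "'n::finite mop \<Rightarrow> bool" where
  "lower A \<longleftrightarrow> (\<forall>j s. j > 0 \<longrightarrow> A j s = 0)"

definition unitri :: "'n::finite mop \<Rightarrow> bool" where
  "unitri A \<longleftrightarrow> lower A \<and> (\<forall>s. A 0 s = mat 1)"

lemma lower_sum:
  assumes "lower A" "lower B"
  shows "op_mult A B m s = (\<Sum>i\<in>{m..0}. A i s ** B (m - i) (s + i))"
  apply (rule op_mult_eq_sum)
  using assms unfolding lower_def by (auto simp: not_less[symmetric])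

lemma lower_mult: "lower A \<Longrightarrow> lower B \<Longrightarrow> lower (op_mult A B)"
  unfolding lower_def[of "op_mult A B"] by (auto simp: lower_sum)

lemma op_mult_one_right: "op_mult A op_one = A"
proof (intro ext)
  fix m s
  have "op_mult A op_one m s = (\<Sum>i\<in>{m}. A i s ** op_one (m - i) (s + i))"
    by (rule op_mult_eq_sum) (auto simp: op_one_def split: if_splits)
  then show "op_mult A op_one m s = A m s" by (simp add: op_one_def)
qed

lemma op_mult_one_left: "op_mult op_one A = A"
proof (intro ext)
  fix m s
  have "op_mult op_one A m s = (\<Sum>i\<in>{0}. op_one i s ** A (m - i) (s + i))"
    by (rule op_mult_eq_sum) (auto simp: op_one_def split: if_splits)
  then show "op_mult op_one A m s = A m s" by (simp add: op_one_def)
qed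

lemma matrix_add_rdistrib': "((B + C) ** A) = (B ** A) + (C ** A)"
  by (vector matrix_matrix_mult_def sum.distrib[symmetric] field_simps)

lemma sum_matrix_mult_right:
  "(\<Sum>i\<in>F. f i) ** (C::'a::semiring_1^'n^'n) = (\<Sum>i\<in>F. f i ** C)"
  by (induction F rule: infinite_finite_induct) (auto simp: matrix_add_rdistrib')

lemma sum_matrix_mult_left:
  "(C::'a::semiring_1^'n^'n) ** (\<Sum>i\<in>F. f i) = (\<Sum>i\<in>F. C ** f i)"
  by (induction F rule: infinite_finite_induct) (auto simp: matrix_add_ldistrib)

lemma lower_assoc:
  assumes A: "lower A" and B: "lower B" and C: "lower C"
  shows "op_mult (op_mult A B) C = op_mult A (op_mult B C)"
proof (intro ext)
  fix m s
  have AB: "op_mult A B j s = (\<Sum>i\<in>{m..0}. A i s ** B (j - i) (s + i))" if "j \<in> {m..0}" for j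
    apply (rule op_mult_eq_sum)
    using A B that unfolding lower_def by (auto simp: not_less[symmetric])
  have BC: "op_mult B C (m - i) (s + i) = (\<Sum>k\<in>(\<lambda>j. j - i) ` {m..0}. B k (s + i) ** C (m - i - k) (s + i + k))"
    if "i \<in> {m..0}" for i
    apply (rule op_mult_eq_sum)
     apply simp
    using B C that unfolding lower_def
    by (auto simp: not_less[symmetric] image_iff intro!: bexI[where x="_ + i"])
  have "op_mult (op_mult A B) C m s = (\<Sum>j\<in>{m..0}. op_mult A B j s ** C (m - j) (s + j))"
    using A B C by (simp add: lower_sum lower_mult)
  also have "\<dots> = (\<Sum>j\<in>{m..0}. \<Sum>i\<in>{m..0}. A i s ** B (j - i) (s + i) ** C (m - j) (s + j))"
    by (rule sum.cong) (simp_all add: AB sum_matrix_mult_right)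
  also have "\<dots> = (\<Sum>i\<in>{m..0}. \<Sum>j\<in>{m..0}. A i s ** B (j - i) (s + i) ** C (m - j) (s + j))"
    by (rule sum.swap)
  also have "\<dots> = (\<Sum>i\<in>{m..0}. A i s ** op_mult B C (m - i) (s + i))"
  proof (rule sum.cong)
    fix i assume i: "i \<in> {m..0}"
    have inj: "inj_on (\<lambda>j. j - i) {m..0::int}" by (auto simp: inj_on_def)
    have "op_mult B C (m - i) (s + i) = (\<Sum>j\<in>{m..0}. B (j - i) (s + i) ** C (m - j) (s + j))"
      unfolding BC[OF i] sum.reindex[OF inj] by (simp add: algebra_simps)
    then show "(\<Sum>j\<in>{m..0}. A i s ** B (j - i) (s + i) ** C (m - j) (s + j)) = A i s ** op_mult B C (m - i) (s + i)"
      by (simp add: sum_matrix_mult_left matrix_mul_assoc)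
  qed simp
  also have "\<dots> = op_mult A (op_mult B C) m s"
    using A B C by (simp add: lower_sum lower_mult)
  finally show "op_mult (op_mult A B) C m s = op_mult A (op_mult B C) m s" .
qed

function rinv :: "'n::finite mop \<Rightarrow> int \<Rightarrow> int \<Rightarrow> complex^'n^'n" where
  "rinv W m s = (if m > 0 then 0 else if m = 0 then mat 1
     else - (\<Sum>i\<in>{m..-1}. W i s ** rinv W (m - i) (s + i)))"
  by auto
termination by (relation "Wellfounded.measure (\<lambda>(W,m,s). nat (-m))") auto

declare rinv.simps[simp del]

lemma unitri_rinv: "unitri (rinv W)"
  unfolding unitri_def lower_def by (auto simp: rinv.simps)

lemma rinv_right:
  assumes "unitri W"
  shows "op_mult W (rinv W) = op_one"
proof (intro ext)
  fix m s
  have lW: "lower W" and W0: "W 0 s = mat 1" using assms by (auto simp: unitri_def)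
  have lV: "lower (rinv W)" using unitri_rinv by (auto simp: unitri_def)
  show "op_mult W (rinv W) m s = op_one m s"
  proof (cases "m > 0")
    case True
    then show ?thesis using lower_mult[OF lW lV] by (auto simp: lower_def op_one_def)
  next
    case False
    show ?thesis
    proof (cases "m = 0")
      case True
      then show ?thesis using lW lV W0 by (simp add: lower_sum op_one_def rinv.simps)
    next
      case False
      with \<open>\<not> m > 0\<close> have mneg: "m < 0" by simp
      have ins: "{m..0} = insert 0 {m..-1}" using mneg by auto
      have "op_mult W (rinv W) m s = W 0 s ** rinv W m s + (\<Sum>i\<in>{m..-1}. W i s ** rinv W (m - i) (s + i))"
        using lW lV by (simp add: lower_sum ins)
      also have "\<dots> = 0"
        using mneg W0 by (subst (1) rinv.simps) simp
      finally show ?thesis using mneg by (simp add: op_one_def)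
    qed
  qed
qed

lemma rinv_left:
  assumes "unitri W"
  shows "op_mult (rinv W) W = op_one"
proof -
  let ?V = "rinv W" let ?V' = "rinv (rinv W)"
  have lW: "lower W" using assms by (auto simp: unitri_def)
  have lV: "lower ?V" and lV': "lower ?V'" using unitri_rinv by (auto simp: unitri_def)
  have "W = op_mult W (op_mult ?V ?V')"
    using rinv_right[OF unitri_rinv[of W]] by (simp add: op_mult_one_right)
  also have "\<dots> = op_mult (op_mult W ?V) ?V'" using lower_assoc[OF lW lV lV'] by simp
  also have "\<dots> = ?V'" using rinv_right[OF assms] by (simp add: op_mult_one_left)
  finally have "W = ?V'" .
  then show ?thesis using rinv_right[OF unitri_rinv[of W]] by simp
qed

lemma bounded_sum:
  assumes "lower W" "\<forall>j s. j > M \<longrightarrow> V j s = 0"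
  shows "op_mult W V m s = (\<Sum>i\<in>{m-M..0}. W i s ** V (m - i) (s + i))"
  apply (rule op_mult_eq_sum)
  using assms unfolding lower_def by (auto simp: not_less[symmetric])

lemma right_inv_unique:
  assumes W: "unitri W" and b1: "bounded_above V1" and b2: "bounded_above V2"
    and e1: "op_mult W V1 = op_one" and e2: "op_mult W V2 = op_one"
  shows "V1 = V2"
proof -
  obtain M1 M2 where M1: "\<forall>j s. j > M1 \<longrightarrow> V1 j s = 0" and M2: "\<forall>j s. j > M2 \<longrightarrow> V2 j s = 0"
    using b1 b2 unfolding bounded_above_def by blast
  define M where "M = max M1 M2"
  have Z1: "\<forall>j s. j > M \<longrightarrow> V1 j s = 0" and Z2: "\<forall>j s. j > M \<longrightarrow> V2 j s = 0"
    using M1 M2 by (auto simp: M_def)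
  have lW: "lower W" and W0: "\<And>s. W 0 s = mat 1" using W by (auto simp: unitri_def)
  have main: "\<forall>m. nat (M - m) = d \<longrightarrow> (\<forall>s. V1 m s = V2 m s)" for d
  proof (induction d rule: less_induct)
    case (less d)
    show ?case
    proof (intro allI impI)
      fix m s assume md: "nat (M - m) = d"
      show "V1 m s = V2 m s"
      proof (cases "m > M")
        case True then show ?thesis using Z1 Z2 by simp
      next
        case False
        have ins: "{m-M..0} = insert 0 {m-M..-1}" using False by auto
        have eqs: "(\<Sum>i\<in>{m-M..-1}. W i s ** V1 (m - i) (s + i)) = (\<Sum>i\<in>{m-M..-1}. W i s ** V2 (m - i) (s + i))"
        proof (rule sum.cong)
          fix i assume i: "i \<in> {m-M..-1}"
          show "W i s ** V1 (m - i) (s + i) = W i s ** V2 (m - i) (s + i)"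
          proof (cases "m - i > M")
            case True then show ?thesis using Z1 Z2 by simp
          next
            case False
            have "nat (M - (m - i)) < d" using i False md \<open>\<not> m > M\<close> by auto
            then show ?thesis using less.IH by auto
          qed
        qed simp
        have "op_mult W V1 m s = op_mult W V2 m s" using e1 e2 by simp
        then have "W 0 s ** V1 m s + (\<Sum>i\<in>{m-M..-1}. W i s ** V1 (m - i) (s + i)) =
                   W 0 s ** V2 m s + (\<Sum>i\<in>{m-M..-1}. W i s ** V2 (m - i) (s + i))"
          by (simp add: bounded_sum[OF lW Z1] bounded_sum[OF lW Z2] ins)
        then show ?thesis using eqs W0 by simp
      qed
    qed
  qed
  show ?thesis using main by (intro ext) blast
qed

lemma lower_bounded: "lower A \<Longrightarrow> bounded_above A"
  unfolding lower_def bounded_above_def by blast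

lemma op_inv_unitri:
  assumes "unitri W"
  shows "op_inv W = rinv W"
  unfolding op_inv_def
proof (rule the_equality)
  show "bounded_above (rinv W) \<and> op_mult W (rinv W) = op_one \<and> op_mult (rinv W) W = op_one"
    using unitri_rinv[of W] rinv_right[OF assms] rinv_left[OF assms]
    by (auto simp: unitri_def lower_bounded)
  fix V assume "bounded_above V \<and> op_mult W V = op_one \<and> op_mult V W = op_one"
  then show "V = rinv W"
    using right_inv_unique[OF assms, of V "rinv W"] unitri_rinv[of W] rinv_right[OF assms]
    by (auto simp: unitri_def lower_bounded)
qed


lemma mat_mult_mat: "mat a ** mat b = (mat (a * b) :: 'a::semiring_1^'n^'n)"
proof -
  have "(mat a ** mat b) $ i $ j = (mat (a * b) :: 'a^'n^'n) $ i $ j" for i j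
  proof -
    have "(mat a ** mat b) $ i $ j = (\<Sum>k\<in>UNIV. (if i = k then a else 0) * (if k = j then b else (0::'a)))"
      by (simp add: matrix_matrix_mult_def mat_def)
    also have "\<dots> = (\<Sum>k\<in>UNIV. if k = i then (if i = j then a * b else 0) else 0)"
      by (rule sum.cong) auto
    also have "\<dots> = (if i = j then a * b else 0)" by (subst sum.delta) auto
    finally show ?thesis by (simp add: mat_def)
  qed
  then show ?thesis by (simp add: vec_eq_iff)
qed
lemma mat_comm: "mat c ** X = X ** (mat c :: 'a::comm_semiring_1^'n^'n)"
proof -
  have "(mat c ** X) $ i $ j = (X ** mat c) $ i $ j" for i j
  proof -
    have "(mat c ** X) $ i $ j = (\<Sum>k\<in>UNIV. (if i = k then c else 0) * X $ k $ j)"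
      by (simp add: matrix_matrix_mult_def mat_def)
    also have "\<dots> = (\<Sum>k\<in>UNIV. if k = i then c * X $ i $ j else 0)" by (rule sum.cong) auto
    also have "\<dots> = c * X $ i $ j" by (subst sum.delta) auto
    also have "\<dots> = (\<Sum>k\<in>UNIV. if k = j then X $ i $ j * c else 0)" by (subst sum.delta) (auto simp: mult.commute)
    also have "\<dots> = (\<Sum>k\<in>UNIV. X $ i $ k * (if k = j then c else 0))" by (rule sum.cong) auto
    also have "\<dots> = (X ** mat c) $ i $ j"
      by (simp add: matrix_matrix_mult_def mat_def)
    finally show ?thesis .
  qed
  then show ?thesis by (simp add: vec_eq_iff)
qed

lemma matrix_sub_ldistrib: "(A::'a::ring_1^'n^'n) ** (B - C) = A ** B - A ** C"
proof -
  have "A ** B = A ** (B - C) + A ** C" by (metis diff_add_cancel matrix_add_ldistrib)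
  then show ?thesis by (simp add: algebra_simps)
qed

lemma matrix_sub_rdistrib: "(B - C) ** (A::'a::ring_1^'n^'n) = B ** A - C ** A"
proof -
  have "B ** A = (B - C) ** A + C ** A" by (metis diff_add_cancel matrix_add_rdistrib')
  then show ?thesis by (simp add: algebra_simps)
qed

definition Tr :: "(int \<Rightarrow> complex^'n^'n) \<Rightarrow> (int \<Rightarrow> complex^'n^'n) \<Rightarrow> 'n::finite mop \<Rightarrow> 'n mop" where
  "Tr L R A = (\<lambda>j s. L s ** A j s ** R (s + j))"

lemma mat_cancel:
  assumes "(c::complex) \<noteq> 0" "mat c ** X = 0" shows "X = (0::complex^'n^'n)"
proof -
  have "X = mat (1/c) ** (mat c ** X)" using assms(1) by (simp add: matrix_mul_assoc mat_mult_mat)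
  then show ?thesis using assms(2) by simp
qed

lemma nz1:
  assumes "Li ** L = mat 1" "M ** M' = mat c" "c \<noteq> 0"
  shows "(L ** X ** M = 0) = (X = (0::complex^'n^'n))"
proof
  assume h: "L ** X ** M = 0"
  have "Li ** (L ** X ** M) ** M' = (Li ** L) ** X ** (M ** M')"
    by (simp add: matrix_mul_assoc)
  also have "\<dots> = X ** mat c" using assms by simp
  also have "\<dots> = mat c ** X" by (rule mat_comm[symmetric])
  finally show "X = 0" using h assms(3) mat_cancel by fastforce
qed simp

lemma nz2:
  assumes "M ** M' = mat c" "R ** Ri = mat 1" "c \<noteq> 0"
  shows "(M' ** Y ** R = 0) = (Y = (0::complex^'n^'n))"
proof
  assume h: "M' ** Y ** R = 0"
  have "M ** (M' ** Y ** R) ** Ri = (M ** M') ** Y ** (R ** Ri)"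
    by (simp add: matrix_mul_assoc)
  also have "\<dots> = mat c ** Y" using assms by simp
  finally have "M ** (M' ** Y ** R) ** Ri = mat c ** Y" .
  then show "Y = 0" using h assms(3) mat_cancel by fastforce
qed simp

lemma Tr_mult:
  assumes c: "c \<noteq> 0" and MM: "\<And>t. M t ** M' t = mat c" and LL: "\<And>s. Li s ** L s = mat 1"
    and RR: "\<And>t. R t ** Ri t = mat 1"
  shows "op_mult (Tr L M A) (Tr M' R B) = Tr (\<lambda>s. mat c ** L s) R (op_mult A B)"
proof (intro ext)
  fix m s
  have S: "{i. Tr L M A i s \<noteq> 0 \<and> Tr M' R B (m - i) (s + i) \<noteq> 0} = {i. A i s \<noteq> 0 \<and> B (m - i) (s + i) \<noteq> 0}"
    unfolding Tr_def using nz1[OF LL MM c] nz2[OF MM RR c] by simp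
  have T: "Tr L M A i s ** Tr M' R B (m - i) (s + i) = mat c ** L s ** (A i s ** B (m - i) (s + i)) ** R (s + m)" for i
  proof -
    have "Tr L M A i s ** Tr M' R B (m - i) (s + i) = L s ** A i s ** (M (s + i) ** M' (s + i)) ** B (m - i) (s + i) ** R (s + m)"
      unfolding Tr_def by (simp add: matrix_mul_assoc)
    also have "\<dots> = L s ** (A i s ** mat c) ** B (m - i) (s + i) ** R (s + m)"
      unfolding MM by (simp add: matrix_mul_assoc)
    also have "L s ** (A i s ** mat c) = mat c ** L s ** A i s"
    proof -
      have "L s ** (A i s ** mat c) = L s ** (mat c ** A i s)" by (simp only: mat_comm[of c "A i s"])
      also have "\<dots> = (L s ** mat c) ** A i s" by (simp only: matrix_mul_assoc)
      also have "\<dots> = mat c ** L s ** A i s" by (simp only: mat_comm[of c "L s"])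
      finally show ?thesis .
    qed
    also have "mat c ** L s ** A i s ** B (m - i) (s + i) ** R (s + m) = mat c ** L s ** (A i s ** B (m - i) (s + i)) ** R (s + m)"
      by (simp add: matrix_mul_assoc)
    finally show ?thesis .
  qed
  show "op_mult (Tr L M A) (Tr M' R B) m s = Tr (\<lambda>s. mat c ** L s) R (op_mult A B) m s"
    unfolding op_mult_def S T unfolding Tr_def
    by (simp add: sum_matrix_mult_left sum_matrix_mult_right matrix_mul_assoc)
qed

lemma Tr_id: "Tr (\<lambda>_. mat 1) (\<lambda>_. mat 1) A = A"
  by (simp add: Tr_def)

definition Sc :: "complex \<Rightarrow> 'n::finite mop \<Rightarrow> 'n mop" where
  "Sc c A = Tr (\<lambda>_. mat c) (\<lambda>_. mat 1) A"

lemma Sc_apply: "Sc c A j s = mat c ** A j s"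
  by (simp add: Sc_def Tr_def)

lemma mult_Sc_left:
  assumes "c \<noteq> 0" shows "op_mult (Sc c A) B = Sc c (op_mult A B)"
proof -
  have "op_mult (Sc c A) B = op_mult (Tr (\<lambda>_. mat c) (\<lambda>_. mat 1) A) (Tr (\<lambda>_. mat 1) (\<lambda>_. mat 1) B)"
    by (simp add: Sc_def Tr_id)
  also have "\<dots> = Tr (\<lambda>s. mat 1 ** mat c) (\<lambda>_. mat 1) (op_mult A B)"
    by (rule Tr_mult[where Li="\<lambda>_. mat (1/c)" and Ri="\<lambda>_. mat 1"]) (use assms in \<open>auto simp: mat_mult_mat\<close>)
  finally show ?thesis by (simp add: Sc_def)
qed

lemma mult_Sc_right:
  assumes "c \<noteq> 0" shows "op_mult A (Sc c B) = Sc c (op_mult A B)"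
proof -
  have "op_mult A (Sc c B) = op_mult (Tr (\<lambda>_. mat 1) (\<lambda>_. mat 1) A) (Tr (\<lambda>_. mat c) (\<lambda>_. mat 1) B)"
    by (simp add: Sc_def Tr_id)
  also have "\<dots> = Tr (\<lambda>s. mat c ** mat 1) (\<lambda>_. mat 1) (op_mult A B)"
    by (rule Tr_mult[where Li="\<lambda>_. mat 1" and Ri="\<lambda>_. mat 1"]) (use assms in \<open>auto\<close>)
  finally show ?thesis by (simp add: Sc_def)
qed

lemma Tr_Sc: "Tr P Q (Sc c A) = Sc c (Tr P Q A)"
proof (intro ext)
  fix j s
  have "P s ** (mat c ** A j s) = mat c ** P s ** A j s"
  proof -
    have "P s ** (mat c ** A j s) = (P s ** mat c) ** A j s" by (simp only: matrix_mul_assoc)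
    also have "\<dots> = mat c ** P s ** A j s" by (simp only: mat_comm[of c "P s"])
    finally show ?thesis .
  qed
  then show "Tr P Q (Sc c A) j s = Sc c (Tr P Q A) j s"
    by (simp add: Tr_def Sc_apply matrix_mul_assoc)
qed

lemma op_pos_Tr: "op_pos (Tr P Q A) = Tr P Q (op_pos A)"
  by (auto simp: op_pos_def Tr_def fun_eq_iff)

definition Dg :: "('n \<Rightarrow> complex) \<Rightarrow> complex^'n^'n::finite" where
  "Dg f = (\<chi> i j. if i = j then f i else 0)"

lemma Dg_mult: "Dg f ** Dg g = Dg (\<lambda>i. f i * g i)"
proof -
  have "(Dg f ** Dg g) $ i $ j = Dg (\<lambda>i. f i * g i) $ i $ j" for i j
  proof -
    have "(Dg f ** Dg g) $ i $ j = (\<Sum>k\<in>UNIV. (if i = k then f i else 0) * (if k = j then g k else 0))"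
      by (simp add: matrix_matrix_mult_def Dg_def)
    also have "\<dots> = (\<Sum>k\<in>UNIV. if k = i then (if i = j then f i * g i else 0) else 0)" by (rule sum.cong) auto
    also have "\<dots> = (if i = j then f i * g i else 0)" by (subst sum.delta) auto
    finally show ?thesis by (simp add: Dg_def)
  qed
  then show ?thesis by (simp add: vec_eq_iff)
qed

lemma Dg_one: "Dg (\<lambda>_. 1) = mat 1"
  by (simp add: Dg_def mat_def)

lemma mat_Dg: "mat c = Dg (\<lambda>_. c)"
  by (simp add: Dg_def mat_def)

lemma Imat_Dg: "Imat k = Dg (\<lambda>i. if i = k then 1 else 0)"
  by (simp add: Dg_def Imat_def vec_eq_iff)

lemma lpd_Dg: "lam_pow_diag lam a s = Dg (\<lambda>i. lam powr (of_int s + a $ i))"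
  by (simp add: Dg_def lam_pow_diag_def)

lemma lpdn_Dg: "lam_pow_diag_neg lam a s = Dg (\<lambda>i. lam powr (- (of_int s + a $ i)))"
  unfolding Dg_def lam_pow_diag_neg_def ..

lemma powr_inv1: "(lam::complex) \<noteq> 0 \<Longrightarrow> lam powr z * lam powr (- z) = 1"
  by (simp add: powr_minus)

lemma powr_inv2: "(lam::complex) \<noteq> 0 \<Longrightarrow> lam powr (- z) * lam powr z = 1"
  by (simp add: powr_minus)

lemma lpd_inv1: 
  assumes "lam \<noteq> 0" shows "lam_pow_diag lam a s ** lam_pow_diag_neg lam a s = mat 1"
proof -
  have "(\<lambda>i. lam powr (of_int s + a $ i) * lam powr (-(of_int s + a $ i))) = (\<lambda>_. 1)"
    by (intro ext) (rule powr_inv1[OF assms])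
  then show ?thesis unfolding lpd_Dg lpdn_Dg Dg_mult by (simp add: Dg_one)
qed

lemma lpd_inv2: 
  assumes "lam \<noteq> 0" shows "lam_pow_diag_neg lam a s ** lam_pow_diag lam a s = mat 1"
proof -
  have "(\<lambda>i. lam powr (-(of_int s + a $ i)) * lam powr (of_int s + a $ i)) = (\<lambda>_. 1)"
    by (intro ext) (rule powr_inv2[OF assms])
  then show ?thesis unfolding lpd_Dg lpdn_Dg Dg_mult by (simp add: Dg_one)
qed

lemma Tr_mult_lpd:
  assumes "lam \<noteq> 0"
  shows "op_mult (Tr (lam_pow_diag lam a) (lam_pow_diag_neg lam b) A) (Tr (lam_pow_diag lam b) (lam_pow_diag_neg lam c) B)
       = Tr (lam_pow_diag lam a) (lam_pow_diag_neg lam c) (op_mult A B)"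
proof -
  have "op_mult (Tr (lam_pow_diag lam a) (lam_pow_diag_neg lam b) A) (Tr (lam_pow_diag lam b) (lam_pow_diag_neg lam c) B)
       = Tr (\<lambda>s. mat 1 ** lam_pow_diag lam a s) (lam_pow_diag_neg lam c) (op_mult A B)"
    by (rule Tr_mult[where Li="lam_pow_diag_neg lam a" and Ri="lam_pow_diag lam c"])
       (use assms in \<open>auto simp: lpd_inv1 lpd_inv2\<close>)
  then show ?thesis by simp
qed

lemma unitri_Tr:
  assumes "lam \<noteq> 0" "unitri W"
  shows "unitri (Tr (lam_pow_diag lam a) (lam_pow_diag_neg lam a) W)"
  using assms lpd_inv1[OF assms(1)] unfolding unitri_def lower_def Tr_def by auto

lemma lower_Tr: "lower W \<Longrightarrow> lower (Tr P Q W)"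
  unfolding lower_def Tr_def by auto

lemma Tr_one:
  assumes "lam \<noteq> 0"
  shows "Tr (lam_pow_diag lam a) (lam_pow_diag_neg lam a) op_one = op_one"
  using lpd_inv1[OF assms] by (auto simp: Tr_def op_one_def fun_eq_iff)

lemma op_inv_Tr:
  assumes lam: "lam \<noteq> 0" and W: "unitri W"
  shows "op_inv (Tr (lam_pow_diag lam a) (lam_pow_diag_neg lam a) W) = Tr (lam_pow_diag lam a) (lam_pow_diag_neg lam a) (op_inv W)"
proof -
  let ?T = "Tr (lam_pow_diag lam a) (lam_pow_diag_neg lam a)"
  have U: "unitri (?T W)" by (rule unitri_Tr[OF lam W])
  have "rinv (?T W) = ?T (rinv W)"
  proof (rule right_inv_unique[OF U])
    show "bounded_above (rinv (?T W))" using unitri_rinv[of "?T W"] by (simp add: unitri_def lower_bounded)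
    show "bounded_above (?T (rinv W))" using unitri_rinv[of W] by (simp add: unitri_def lower_bounded lower_Tr)
    show "op_mult (?T W) (rinv (?T W)) = op_one" by (rule rinv_right[OF U])
    show "op_mult (?T W) (?T (rinv W)) = op_one"
      by (simp add: Tr_mult_lpd[OF lam] rinv_right[OF W] Tr_one[OF lam])
  qed
  then show ?thesis by (simp add: op_inv_unitri U W)
qed

lemma mult_fun_left: "op_mult (op_mul_fun f) A m s = f s ** A m s"
proof -
  have "op_mult (op_mul_fun f) A m s = (\<Sum>i\<in>{0}. op_mul_fun f i s ** A (m - i) (s + i))"
    by (rule op_mult_eq_sum) (auto simp: op_mul_fun_def split: if_splits)
  then show ?thesis by (simp add: op_mul_fun_def)
qed

lemma mult_fun_right: "op_mult A (op_mul_fun g) m s = A m s ** g (s + m)"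
proof -
  have "op_mult A (op_mul_fun g) m s = (\<Sum>i\<in>{m}. A i s ** op_mul_fun g (m - i) (s + i))"
    by (rule op_mult_eq_sum) (auto simp: op_mul_fun_def split: if_splits)
  then show ?thesis by (simp add: op_mul_fun_def)
qed

lemma gauge_Tr: "gauge lam a b F x = Tr (lam_pow_diag lam a) (lam_pow_diag_neg lam b) (F (xscale lam x))"
  by (simp add: gauge_def Tr_def fun_eq_iff mult_fun_left mult_fun_right)

lemma xscale_Tq: "xscale lam (Tq q n k x) = Tq q n k (xscale lam x)"
  by (auto simp: xscale_def Tq_def fun_eq_iff)

lemma K_apply: "op_mult (op_mul_fun (\<lambda>_. Imat k)) (op_Lam m) j s = (if j = m then Imat k else 0)"
  by (simp add: mult_fun_left op_Lam_def)

lemma powr_K: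
  assumes "(lam::complex) \<noteq> 0"
  shows "lam powr (of_int s + a) * (lam ^ n * 1) * lam powr (-(of_int (s + int n) + a)) = 1"
proof -
  have e: "-(of_int (s + int n) + a) = -((of_int s + a) + of_nat n)" by simp
  have nz: "lam powr (of_int s + a) \<noteq> 0" "lam ^ n \<noteq> 0" using assms by auto
  show ?thesis unfolding e powr_minus powr_add powr_nat'[of lam n, OF disjI1[OF assms]]
    using nz by (simp add: field_simps)
qed

lemma K_Tr:
  assumes lam: "lam \<noteq> 0"
  shows "op_mult (op_mul_fun (\<lambda>_. Imat k)) (op_Lam (int n)) =
    Tr (lam_pow_diag lam a) (lam_pow_diag_neg lam a) (Sc (lam ^ n) (op_mult (op_mul_fun (\<lambda>_. Imat k)) (op_Lam (int n))))"
proof (intro ext)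
  fix j s
  have "lam_pow_diag lam a s ** (mat (lam ^ n) ** Imat k) ** lam_pow_diag_neg lam a (s + int n) = Imat k"
  proof -
    have "(\<lambda>i. lam powr (of_int s + a $ i) * (lam ^ n * (if i = k then 1 else 0)) * lam powr (-(of_int (s + int n) + a $ i)))
        = (\<lambda>i. if i = k then 1 else 0)"
      using powr_K[OF lam] by (auto simp: fun_eq_iff mult.assoc)
    then show ?thesis unfolding lpd_Dg lpdn_Dg mat_Dg Imat_Dg Dg_mult by simp
  qed
  then show "op_mult (op_mul_fun (\<lambda>_. Imat k)) (op_Lam (int n)) j s =
    Tr (lam_pow_diag lam a) (lam_pow_diag_neg lam a) (Sc (lam ^ n) (op_mult (op_mul_fun (\<lambda>_. Imat k)) (op_Lam (int n)))) j s"
    by (auto simp: K_apply Tr_def Sc_apply)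
qed

lemma op_pos_Sc: "op_pos (Sc c A) = Sc c (op_pos A)"
  unfolding Sc_def by (rule op_pos_Tr)

lemma key_scalar:
  "mat (c * e) ** (P ** Z ** Q) = mat c ** (P ** (mat e ** Z) ** (Q::complex^'n^'n))"
proof -
  have "P ** (mat e ** Z) = mat e ** P ** Z"
  proof -
    have "P ** (mat e ** Z) = (P ** mat e) ** Z" by (simp only: matrix_mul_assoc)
    also have "\<dots> = mat e ** P ** Z" by (simp only: mat_comm[of e P])
    finally show ?thesis .
  qed
  then show ?thesis by (simp add: matrix_mul_assoc mat_mult_mat[symmetric])
qed

lemma main_eq:
  fixes W Wt :: "'n::finite xvars \<Rightarrow> 'n mop"
  assumes lam: "lam \<noteq> 0" and xnz: "x n k \<noteq> 0"
    and U: "unitri (W (xscale lam x))"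
    and H: "Dq q n k Wt (xscale lam x) =
             (\<lambda>j s. op_mult (op_pos (op_mult (op_mult (W (Tq q n k (xscale lam x))) (op_mult (op_mul_fun (\<lambda>_. Imat k)) (op_Lam (int n))))
                                             (op_inv (W (xscale lam x)))))
                            (Wt (xscale lam x)) j s
                    - op_mult (Wt (Tq q n k (xscale lam x))) (op_mult (op_mul_fun (\<lambda>_. Imat k)) (op_Lam (int n))) j s)"
  shows "Dq q n k (gauge lam a b Wt) x =
             (\<lambda>j s. op_mult (op_pos (op_mult (op_mult (gauge lam a a W (Tq q n k x)) (op_mult (op_mul_fun (\<lambda>_. Imat k)) (op_Lam (int n))))
                                             (op_inv (gauge lam a a W x))))
                            (gauge lam a b Wt x) j s
                    - op_mult (gauge lam a b Wt (Tq q n k x)) (op_mult (op_mul_fun (\<lambda>_. Imat k)) (op_Lam (int n))) j s)"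
proof -
  define y where "y = xscale lam x"
  define c where "c = lam ^ n"
  define K where "K = (op_mult (op_mul_fun (\<lambda>_. Imat k)) (op_Lam (int n)) :: 'n mop)"
  define Pa where "Pa = (lam_pow_diag lam a :: int \<Rightarrow> complex^'n^'n)"
  define Pna where "Pna = (lam_pow_diag_neg lam a :: int \<Rightarrow> complex^'n^'n)"
  define Pb where "Pb = (lam_pow_diag lam b :: int \<Rightarrow> complex^'n^'n)"
  define Pnb where "Pnb = (lam_pow_diag_neg lam b :: int \<Rightarrow> complex^'n^'n)"
  have c0: "c \<noteq> 0" using lam by (simp add: c_def)
  have yx: "y n k = c * x n k" by (simp add: y_def xscale_def c_def)
  have KA: "K = Tr Pa Pna (Sc c K)" unfolding K_def Pa_def Pna_def c_def by (rule K_Tr[OF lam])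
  have KB: "K = Tr Pb Pnb (Sc c K)" unfolding K_def Pb_def Pnb_def c_def by (rule K_Tr[OF lam])
  have MAA: "op_mult (Tr Pa Pna A) (Tr Pa Pna B) = Tr Pa Pna (op_mult A B)" for A B
    unfolding Pa_def Pna_def by (rule Tr_mult_lpd[OF lam])
  have MAB: "op_mult (Tr Pa Pna A) (Tr Pa Pnb B) = Tr Pa Pnb (op_mult A B)" for A B
    unfolding Pa_def Pna_def Pnb_def by (rule Tr_mult_lpd[OF lam])
  have MBB: "op_mult (Tr Pa Pnb A) (Tr Pb Pnb B) = Tr Pa Pnb (op_mult A B)" for A B
    unfolding Pa_def Pb_def Pnb_def by (rule Tr_mult_lpd[OF lam])
  have inv: "op_inv (Tr Pa Pna (W y)) = Tr Pa Pna (op_inv (W y))"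
    unfolding Pa_def Pna_def y_def by (rule op_inv_Tr[OF lam U])
  have g: "gauge lam a a W (Tq q n k x) = Tr Pa Pna (W (Tq q n k y))"
          "gauge lam a a W x = Tr Pa Pna (W y)"
          "gauge lam a b Wt x = Tr Pa Pnb (Wt y)"
          "gauge lam a b Wt (Tq q n k x) = Tr Pa Pnb (Wt (Tq q n k y))"
    by (simp_all add: gauge_Tr xscale_Tq Pa_def Pna_def Pnb_def y_def)
  define R1 where "R1 = op_mult (op_pos (op_mult (op_mult (W (Tq q n k y)) K) (op_inv (W y)))) (Wt y)"
  define R2 where "R2 = op_mult (Wt (Tq q n k y)) K"
  have H': "mat (1 / y n k) ** (Wt y j s - Wt (Tq q n k y) j s) = R1 j s - R2 j s" for j s
    using fun_cong[OF fun_cong[OF H, of j], of s] unfolding Dq_def R1_def R2_def K_def y_def by simp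
  have X: "op_mult (op_mult (Tr Pa Pna (W (Tq q n k y))) K) (Tr Pa Pna (op_inv (W y)))
         = Tr Pa Pna (Sc c (op_mult (op_mult (W (Tq q n k y)) K) (op_inv (W y))))"
  proof -
    have "op_mult (Tr Pa Pna (W (Tq q n k y))) K = Tr Pa Pna (Sc c (op_mult (W (Tq q n k y)) K))"
      by (subst KA) (simp add: MAA mult_Sc_right[OF c0])
    then show ?thesis by (simp add: MAA mult_Sc_left[OF c0])
  qed
  have RHS1: "op_mult (op_pos (op_mult (op_mult (Tr Pa Pna (W (Tq q n k y))) K) (op_inv (Tr Pa Pna (W y))))) (Tr Pa Pnb (Wt y))
        = Tr Pa Pnb (Sc c R1)"
    unfolding inv X op_pos_Tr op_pos_Sc MAB mult_Sc_left[OF c0] R1_def ..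
  have RHS2: "op_mult (Tr Pa Pnb (Wt (Tq q n k y))) K = Tr Pa Pnb (Sc c R2)"
    by (subst KB) (simp add: MBB mult_Sc_right[OF c0] R2_def)
  show ?thesis
  proof (intro ext)
    fix j s
    have "Dq q n k (gauge lam a b Wt) x j s
       = mat (c * (1 / y n k)) ** (Pa s ** (Wt y j s - Wt (Tq q n k y) j s) ** Pnb (s + j))"
      using xnz c0 yx
      by (simp add: Dq_def g Tr_def matrix_sub_ldistrib matrix_sub_rdistrib xscale_Tq[symmetric] y_def gauge_Tr Pa_def Pnb_def)
    also have "\<dots> = mat c ** (Pa s ** (R1 j s - R2 j s) ** Pnb (s + j))"
      unfolding key_scalar H' ..
    also have "\<dots> = Tr Pa Pnb (Sc c R1) j s - Tr Pa Pnb (Sc c R2) j s"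
      by (simp only: Tr_Sc) (simp add: Sc_apply Tr_def matrix_sub_ldistrib matrix_sub_rdistrib)
    finally show "Dq q n k (gauge lam a b Wt) x j s =
             op_mult (op_pos (op_mult (op_mult (gauge lam a a W (Tq q n k x)) (op_mult (op_mul_fun (\<lambda>_. Imat k)) (op_Lam (int n))))
                                             (op_inv (gauge lam a a W x))))
                            (gauge lam a b Wt x) j s
                    - op_mult (gauge lam a b Wt (Tq q n k x)) (op_mult (op_mul_fun (\<lambda>_. Imat k)) (op_Lam (int n))) j s"
      unfolding g K_def[symmetric] RHS1 RHS2 .
  qed
qed


lemma invertible_lpd: "lam \<noteq> 0 \<Longrightarrow> invertible (lam_pow_diag lam a s)"
  unfolding invertible_def using lpd_inv1 lpd_inv2 by blast

lemma invertible_lpdn: "lam \<noteq> 0 \<Longrightarrow> invertible (lam_pow_diag_neg lam a s)"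
  unfolding invertible_def using lpd_inv1 lpd_inv2 by blast

theorem proposition1:
  fixes q lam :: complex
    and \<alpha> \<beta> :: "complex^'n::finite"
    and W Wb :: "'n xvars \<Rightarrow> 'n mop"
  assumes "norm q > 1"
    and "lam \<noteq> 0"
    and "qsato_solution q W Wb"
  shows "qsato_solution q (gauge lam \<alpha> \<alpha> W) (gauge lam \<alpha> \<beta> Wb)"
proof -
  note lam = assms(2)
  have S1: "\<And>x s. W x 0 s = mat 1" and S1': "\<And>x s j. j > 0 \<Longrightarrow> W x j s = 0"
    and S2: "\<And>x s j. j < 0 \<Longrightarrow> Wb x j s = 0" and S2': "\<And>x s. invertible (Wb x 0 s)"
    and H: "\<And>n k x Wt. n \<ge> 1 \<Longrightarrow> x n k \<noteq> 0 \<Longrightarrow> Wt \<in> {W, Wb} \<Longrightarrow>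
           Dq q n k Wt x =
             (\<lambda>j s. op_mult (op_pos (op_mult (op_mult (W (Tq q n k x)) (op_mult (op_mul_fun (\<lambda>_. Imat k)) (op_Lam (int n))))
                                             (op_inv (W x))))
                            (Wt x) j s
                    - op_mult (Wt (Tq q n k x)) (op_mult (op_mul_fun (\<lambda>_. Imat k)) (op_Lam (int n))) j s)"
    using assms(3) unfolding qsato_solution_def by blast+
  have U: "unitri (W x)" for x using S1 S1' by (auto simp: unitri_def lower_def)
  show ?thesis
    unfolding qsato_solution_def
  proof (intro conjI allI impI ballI)
    fix x s
    show "gauge lam \<alpha> \<alpha> W x 0 s = mat 1"
      by (simp add: gauge_Tr Tr_def S1 lpd_inv1[OF lam])
    show "gauge lam \<alpha> \<alpha> W x j s = 0" if "j > 0" for j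
      using that by (simp add: gauge_Tr Tr_def S1')
    show "gauge lam \<alpha> \<beta> Wb x j s = 0" if "j < 0" for j
      using that by (simp add: gauge_Tr Tr_def S2)
    show "invertible (gauge lam \<alpha> \<beta> Wb x 0 s)"
      by (simp add: gauge_Tr Tr_def invertible_mult invertible_lpd[OF lam] invertible_lpdn[OF lam] S2')
  next
    fix n :: nat and k :: 'n and x :: "'n xvars" and Wt
    assume n: "1 \<le> n" and xnz: "x n k \<noteq> 0" and Wt: "Wt \<in> {gauge lam \<alpha> \<alpha> W, gauge lam \<alpha> \<beta> Wb}"
    have ynz: "xscale lam x n k \<noteq> 0" using xnz lam by (simp add: xscale_def)
    from Wt show "Dq q n k Wt x =
             (\<lambda>j s. op_mult (op_pos (op_mult (op_mult (gauge lam \<alpha> \<alpha> W (Tq q n k x)) (op_mult (op_mul_fun (\<lambda>_. Imat k)) (op_Lam (int n))))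
                                             (op_inv (gauge lam \<alpha> \<alpha> W x))))
                            (Wt x) j s
                    - op_mult (Wt (Tq q n k x)) (op_mult (op_mul_fun (\<lambda>_. Imat k)) (op_Lam (int n))) j s)"
    proof
      assume "Wt = gauge lam \<alpha> \<alpha> W"
      then show ?thesis using main_eq[OF lam xnz U H[of n "xscale lam x" k W, OF n ynz]] by simp
    next
      assume "Wt \<in> {gauge lam \<alpha> \<beta> Wb}"
      then show ?thesis using main_eq[OF lam xnz U H[of n "xscale lam x" k Wb, OF n ynz]] by simp
    qed
  qed
qed

end
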